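(* Let $p,n\in\mathbb N$ with $p\ge n\ge 10$, and let $G\in \mathrm{Ex}(p;T_n^3)$. If $G$ is connected, then $\Delta(G)\in\{n-5,n-4\}$.
   Context: All graphs are finite simple graphs; $\Delta(G)$ is the maximum degree of $G$. For a graph $L$, $\mathrm{ex}(p;L)$ is the maximum number of edges in a graph on $p$ vertices containing no subgraph isomorphic to $L$, and $\mathrm{Ex}(p;L)$ is the set of graphs on $p$ vertices containing no copy of $L$ and having exactly $\mathrm{ex}(p;L)$ edges. For $n\ge 6$, $T_n^3$ is the tree on vertex set $\{v_0,\ldots,v_{n-1}\}$ with edge set $\{v_0v_1,\ldots,v_0v_{n-4},\ v_1v_{n-3},\ v_1v_{n-2},\ v_1v_{n-1}\}$. *)

theory Defs
  imports Main
begin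

definition is_graph :: "'a set \<Rightarrow> 'a set set \<Rightarrow> bool" where
  "is_graph V E \<longleftrightarrow> finite V \<and> (\<forall>e\<in>E. e \<subseteq> V \<and> card e = 2)"

definition contains_copy :: "'a set \<Rightarrow> 'a set set \<Rightarrow> 'b set \<Rightarrow> 'b set set \<Rightarrow> bool" where
  "contains_copy V E LV LE \<longleftrightarrow>
     (\<exists>f. inj_on f LV \<and> f ` LV \<subseteq> V \<and> (\<forall>e\<in>LE. f ` e \<in> E))"

text \<open>ex(p;L): maximum number of edges of an L-free graph on p vertices
  (vertices taken from nat, which is no loss of generality).\<close>
definition ex_num :: "nat \<Rightarrow> 'b set \<Rightarrow> 'b set set \<Rightarrow> nat" where
  "ex_num p LV LE = Max {card E | (V :: nat set) E.
      is_graph V E \<and> card V = p \<and> \<not> contains_copy V E LV LE}"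

definition in_Ex :: "nat \<Rightarrow> 'b set \<Rightarrow> 'b set set \<Rightarrow> 'a set \<Rightarrow> 'a set set \<Rightarrow> bool" where
  "in_Ex p LV LE V E \<longleftrightarrow> is_graph V E \<and> card V = p \<and> \<not> contains_copy V E LV LE
      \<and> card E = ex_num p LV LE"

definition degree :: "'a set set \<Rightarrow> 'a \<Rightarrow> nat" where
  "degree E v = card {e\<in>E. v \<in> e}"

definition max_degree :: "'a set \<Rightarrow> 'a set set \<Rightarrow> nat" where
  "max_degree V E = Max (degree E ` V)"

definition adj :: "'a set set \<Rightarrow> 'a \<Rightarrow> 'a \<Rightarrow> bool" where
  "adj E u v \<longleftrightarrow> {u, v} \<in> E"

definition connected_graph :: "'a set \<Rightarrow> 'a set set \<Rightarrow> bool" where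
  "connected_graph V E \<longleftrightarrow> V \<noteq> {} \<and> (\<forall>u\<in>V. \<forall>v\<in>V. (adj E)\<^sup>*\<^sup>* u v)"

text \<open>The tree T_n^3 on vertices v_0..v_{n-1} (v_i represented by i).\<close>
definition T3_V :: "nat \<Rightarrow> nat set" where
  "T3_V n = {0..<n}"

definition T3_E :: "nat \<Rightarrow> nat set set" where
  "T3_E n = {{0, i} | i. 1 \<le> i \<and> i \<le> n - 4} \<union> {{1, i} | i. n - 3 \<le> i \<and> i \<le> n - 1}"

end

theory Submission
  imports Defs
begin

definition nb :: "'a set set \<Rightarrow> 'a \<Rightarrow> 'a set" where
  "nb E x = {y. {x,y} \<in> E}"

definition touch :: "'a set set \<Rightarrow> 'a set \<Rightarrow> 'a set set" where
  "touch E W = {e\<in>E. e \<inter> W \<noteq> {}}"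

lemma nb_sub: "is_graph V E \<Longrightarrow> nb E x \<subseteq> V"
  unfolding is_graph_def nb_def by auto

lemma nb_fin: "is_graph V E \<Longrightarrow> finite (nb E x)"
  using nb_sub is_graph_def finite_subset by metis

lemma nb_irr: "is_graph V E \<Longrightarrow> x \<notin> nb E x"
  unfolding is_graph_def nb_def by force

lemma nb_sym: "y \<in> nb E x \<longleftrightarrow> x \<in> nb E y"
  unfolding nb_def by (simp add: insert_commute)

lemma nb_V: "is_graph V E \<Longrightarrow> y \<in> nb E x \<Longrightarrow> x \<in> V"
  unfolding is_graph_def nb_def by auto

lemma E_fin: "is_graph V E \<Longrightarrow> finite E"
  unfolding is_graph_def by (meson Pow_iff finite_Pow_iff finite_subset subsetI)

lemma degree_nb:
  assumes G: "is_graph V E"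
  shows "degree E v = card (nb E v)"
proof -
  have "bij_betw (\<lambda>y. {v,y}) (nb E v) {e\<in>E. v\<in>e}"
  proof (rule bij_betwI')
    fix x y assume "x \<in> nb E v" "y \<in> nb E v"
    show "({v, x} = {v, y}) = (x = y)" by (auto simp: doubleton_eq_iff)
  next
    fix x assume "x \<in> nb E v" then show "{v, x} \<in> {e \<in> E. v \<in> e}" by (auto simp: nb_def)
  next
    fix e assume e: "e \<in> {e \<in> E. v \<in> e}"
    then have "card e = 2" using G unfolding is_graph_def by auto
    then obtain a b where ab: "e = {a,b}" "a \<noteq> b" by (auto simp: card_2_iff)
    show "\<exists>x\<in>nb E v. e = {v, x}"
    proof (cases "v = a")
      case True then show ?thesis using e ab by (auto simp: nb_def)
    next
      case False then have "v = b" using e ab by auto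
      then show ?thesis using e ab by (auto simp: nb_def insert_commute)
    qed
  qed
  then show ?thesis unfolding degree_def by (simp add: bij_betw_same_card)
qed

lemma T_embed:
  assumes G: "is_graph V E" and n: "n \<ge> 10" and xy: "{x,y} \<in> E"
    and A: "A \<subseteq> nb E x - {y}" "card A = n - 5"
    and B: "B \<subseteq> nb E y - {x}" "card B = 3" and AB: "A \<inter> B = {}"
  shows "contains_copy V E (T3_V n) (T3_E n)"
proof -
  have fA: "finite A" using A nb_fin[OF G] finite_subset by blast
  have fB: "finite B" using B nb_fin[OF G] finite_subset by blast
  obtain g where g: "bij_betw g {2..n-4} A"
    using finite_same_card_bij[OF _ fA, of "{2..n-4}"] A n by auto
  obtain h where h: "bij_betw h {n-3..n-1} B"
    using finite_same_card_bij[OF _ fB, of "{n-3..n-1}"] B n by auto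
  define f where "f i = (if i = 0 then x else if i = 1 then y else if i \<le> n - 4 then g i else h i)" for i
  have xne: "x \<noteq> y" using xy G unfolding is_graph_def by fastforce
  have xA: "x \<notin> A" using A nb_irr[OF G] by auto
  have yB: "y \<notin> B" using B nb_irr[OF G] by auto
  have yA: "y \<notin> A" "x \<notin> B" using A B by auto
  have gi: "\<And>i. i \<in> {2..n-4} \<Longrightarrow> g i \<in> A" using g bij_betwE by blast
  have hi: "\<And>i. i \<in> {n-3..n-1} \<Longrightarrow> h i \<in> B" using h bij_betwE by blast
  have ginj: "inj_on g {2..n-4}" using g bij_betw_imp_inj_on by blast
  have hinj: "inj_on h {n-3..n-1}" using h bij_betw_imp_inj_on by blast
  have fr: "f i \<in> (if i = 0 then {x} else if i = 1 then {y} else if i \<le> n-4 then A else B)" if "i < n" for i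
  proof -
    have "\<not> i \<le> n - 4 \<Longrightarrow> i \<in> {n-3..n-1}" using that by auto
    then show ?thesis using that gi hi n unfolding f_def by auto
  qed
  have inj: "inj_on f {0..<n}"
  proof (rule inj_onI)
    fix i j assume i: "i \<in> {0..<n}" and j: "j \<in> {0..<n}" and eq: "f i = f j"
    show "i = j"
    proof (cases "i = 0 \<or> i = 1 \<or> j = 0 \<or> j = 1")
      case True
      then show ?thesis using fr[of i] fr[of j] i j eq xne xA yA yB AB
        by (auto split: if_splits)
    next
      case False
      show ?thesis
      proof (cases "i \<le> n - 4")
        case True
        then have fi: "f i = g i" using False unfolding f_def by auto
        show ?thesis
        proof (cases "j \<le> n-4")
          case True
          then have "f j = g j" using False unfolding f_def by auto
          moreover have "i \<in> {2..n-4}" "j \<in> {2..n-4}" using \<open>i \<le> n-4\<close> True False by auto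
          ultimately have "g i = g j" "i \<in> {2..n-4}" "j \<in> {2..n-4}" using fi eq by auto
          then show ?thesis using inj_onD[OF ginj] by blast
        next
          case F2: False
          then have "f j = h j" using False unfolding f_def by auto
          moreover have "i \<in> {2..n-4}" "j \<in> {n-3..n-1}" using \<open>i \<le> n-4\<close> F2 False j by auto
          ultimately show ?thesis using gi[of i] hi[of j] fi eq AB by auto
        qed
      next
        case F1: False
        then have fi: "f i = h i" using False unfolding f_def by auto
        show ?thesis
        proof (cases "j \<le> n-4")
          case True
          then have "f j = g j" using False unfolding f_def by auto
          moreover have "j \<in> {2..n-4}" "i \<in> {n-3..n-1}" using True F1 False i by auto
          ultimately show ?thesis using gi[of j] hi[of i] fi eq AB by auto
        next
          case F2: False
          then have "f j = h j" using False unfolding f_def by auto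
          moreover have "i \<in> {n-3..n-1}" "j \<in> {n-3..n-1}" using F1 F2 i j by auto
          ultimately have "h i = h j" "i \<in> {n-3..n-1}" "j \<in> {n-3..n-1}" using fi eq by auto
          then show ?thesis using inj_onD[OF hinj] by blast
        qed
      qed
    qed
  qed
  have xV: "x \<in> V" "y \<in> V" using xy G unfolding is_graph_def by auto
  have AV: "A \<subseteq> V" "B \<subseteq> V" using A B nb_sub[OF G] by auto
  have img: "f ` {0..<n} \<subseteq> V"
  proof
    fix z assume "z \<in> f ` {0..<n}"
    then obtain i where "i < n" "z = f i" by auto
    then show "z \<in> V" using fr[of i] xV AV by (auto split: if_splits)
  qed
  have f0: "f 0 = x" and f1: "f 1 = y" unfolding f_def by auto
  have edges: "\<forall>e\<in>T3_E n. f ` e \<in> E"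
  proof
    fix e assume "e \<in> T3_E n"
    then consider (a) i where "e = {0,i}" "1 \<le> i" "i \<le> n-4" | (b) i where "e = {1,i}" "n-3 \<le> i" "i \<le> n-1"
      unfolding T3_E_def by blast
    then show "f ` e \<in> E"
    proof cases
      case a
      show ?thesis
      proof (cases "i = 1")
        case True then have "f ` e = {x,y}" using a f0 f1 by simp
        then show ?thesis using xy by simp
      next
        case False
        then have "f i = g i" "i \<in> {2..n-4}" using a unfolding f_def by auto
        then have "f i \<in> nb E x" using gi A by auto
        moreover have "f ` e = {x, f i}" using a f0 by simp
        ultimately show ?thesis unfolding nb_def by simp
      qed
    next
      case b
      then have "f i = h i" "i \<in> {n-3..n-1}" using n unfolding f_def by auto
      then have "f i \<in> nb E y" using hi B by auto
      moreover have "f ` e = {y, f i}" using b f1 by simp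
      ultimately show ?thesis unfolding nb_def by simp
    qed
  qed
  show ?thesis unfolding contains_copy_def T3_V_def using inj img edges by blast
qed

lemma T_gen:
  assumes G: "is_graph V E" and n: "n \<ge> 10" and xy: "{x,y} \<in> E"
    and k: "k \<le> 3" and c1: "card (nb E y - {x}) \<ge> 3"
    and c2: "card (nb E y - {x} - nb E x) \<ge> k"
    and c3: "card (nb E x - {y}) + k \<ge> n - 2"
  shows "contains_copy V E (T3_V n) (T3_E n)"
proof -
  have fin: "finite (nb E z)" for z using nb_fin[OF G] .
  obtain B1 where B1: "B1 \<subseteq> nb E y - {x} - nb E x" "card B1 = k" "finite B1"
    using obtain_subset_with_card_n[OF c2] by blast
  have "card (nb E y - {x} - B1) \<ge> 3 - k"
    using diff_card_le_card_Diff[OF B1(3), of "nb E y - {x}"] c1 B1 by linarith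
  then obtain B2 where B2: "B2 \<subseteq> nb E y - {x} - B1" "card B2 = 3 - k" "finite B2"
    using obtain_subset_with_card_n by blast
  define B where "B = B1 \<union> B2"
  have cB: "card B = 3" unfolding B_def using B1 B2 k card_Un_disjoint[OF B1(3) B2(3)] by auto
  have Bs: "B \<subseteq> nb E y - {x}" unfolding B_def using B1 B2 by auto
  have "B \<inter> nb E x \<subseteq> B2" unfolding B_def using B1 by auto
  then have "card (B \<inter> nb E x) \<le> 3 - k" using B2 card_mono by metis
  moreover have "card (nb E x - {y} - B) = card (nb E x - {y} - (B \<inter> nb E x))"
    by (rule arg_cong[where f=card]) auto
  moreover have "card (nb E x - {y} - (B \<inter> nb E x)) \<ge> card (nb E x - {y}) - card (B \<inter> nb E x)"
    using diff_card_le_card_Diff fin by (metis finite_Int)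
  ultimately have "card (nb E x - {y} - B) \<ge> card (nb E x - {y}) - (3 - k)" by linarith
  then have "card (nb E x - {y} - B) \<ge> n - 5" using c3 k by linarith
  then obtain A where A: "A \<subseteq> nb E x - {y} - B" "card A = n - 5"
    using obtain_subset_with_card_n by metis
  show ?thesis
    using T_embed[OF G n xy _ A(2) Bs cB] A by auto
qed

lemma graph_card_le:
  assumes "is_graph (V::nat set) E" "card V = p"
  shows "card E \<le> 2 ^ p"
proof -
  have "E \<subseteq> Pow V" using assms unfolding is_graph_def by auto
  moreover have "finite V" using assms unfolding is_graph_def by auto
  ultimately have "card E \<le> card (Pow V)" by (meson card_mono finite_Pow_iff)
  then show ?thesis using assms \<open>finite V\<close> by (simp add: card_Pow)
qed

lemma ex_bound:
  fixes V :: "'a set" and E :: "'a set set"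
  assumes G: "is_graph V E" and cV: "card V = p" and nc: "\<not> contains_copy V E LV LE"
  shows "card E \<le> ex_num p LV LE"
proof -
  have fV: "finite V" using G unfolding is_graph_def by auto
  obtain h where h: "bij_betw h V {0..<p}"
    using finite_same_card_bij[OF fV, of "{0..<p}"] cV by auto
  have hinj: "inj_on h V" using h bij_betw_imp_inj_on by blast
  define E' where "E' = (\<lambda>e. h ` e) ` E"
  have EV: "\<And>e. e \<in> E \<Longrightarrow> e \<subseteq> V" using G unfolding is_graph_def by auto
  have G': "is_graph {0..<p} E'"
    unfolding is_graph_def E'_def
  proof (intro conjI ballI)
    fix e' assume "e' \<in> (\<lambda>e. h ` e) ` E"
    then obtain e where e: "e \<in> E" "e' = h ` e" by auto
    have "inj_on h e" using hinj EV[OF e(1)] inj_on_subset by blast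
    then have "card e' = card e" using e by (simp add: card_image)
    then show "card e' = 2" using G e unfolding is_graph_def by auto
    show "e' \<subseteq> {0..<p}" using e EV h bij_betwE by blast
  qed simp
  have cE: "card E' = card E"
    unfolding E'_def
  proof (rule card_image)
    show "inj_on ((`) h) E"
      by (rule inj_onI) (metis EV hinj inj_on_image_eq_iff)
  qed
  have nc': "\<not> contains_copy {0..<p} E' LV LE"
  proof
    assume "contains_copy {0..<p} E' LV LE"
    then obtain f where f: "inj_on f LV" "f ` LV \<subseteq> {0..<p}" "\<forall>e\<in>LE. f ` e \<in> E'"
      unfolding contains_copy_def by blast
    define g where "g = inv_into V h \<circ> f"
    have bi: "bij_betw (inv_into V h) {0..<p} V" using h bij_betw_inv_into by blast
    have "inj_on g LV" unfolding g_def
      by (rule comp_inj_on[OF f(1)]) (meson bi bij_betw_imp_inj_on f(2) inj_on_subset)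
    moreover have "g ` LV \<subseteq> V" unfolding g_def image_comp[symmetric]
      using f(2) bi by (metis bij_betw_def image_mono)
    moreover have "\<forall>e\<in>LE. g ` e \<in> E"
    proof
      fix e assume "e \<in> LE"
      then obtain e0 where e0: "e0 \<in> E" "f ` e = h ` e0" using f(3) unfolding E'_def by auto
      have "g ` e = inv_into V h ` (h ` e0)" unfolding g_def using e0 by (metis image_comp)
      also have "\<dots> = e0" using hinj EV[OF e0(1)] by simp
      finally show "g ` e \<in> E" using e0 by simp
    qed
    ultimately have "contains_copy V E LV LE" unfolding contains_copy_def by blast
    then show False using nc by simp
  qed
  have mem: "card E' \<in> {card E | (V :: nat set) E. is_graph V E \<and> card V = p \<and> \<not> contains_copy V E LV LE}"
    by (rule CollectI, rule exI[of _ "{0..<p}"], rule exI[of _ E']) (simp add: G' nc' cE)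
  have fin: "finite {card E | (V :: nat set) E. is_graph V E \<and> card V = p \<and> \<not> contains_copy V E LV LE}"
    by (rule finite_subset[of _ "{..2^p}"]) (auto dest: graph_card_le)
  show ?thesis unfolding ex_num_def using Max_ge[OF fin mem] cE by simp
qed

lemma copy_deg:
  assumes G: "is_graph V E" and n: "n \<ge> 10" and c: "contains_copy V E (T3_V n) (T3_E n)"
  shows "\<exists>z. n - 4 \<le> card (nb E z)"
proof -
  obtain f where f: "inj_on f {0..<n}" "\<forall>e\<in>T3_E n. f ` e \<in> E"
    using c unfolding contains_copy_def T3_V_def by blast
  have "f ` {1..n-4} \<subseteq> nb E (f 0)"
  proof
    fix z assume "z \<in> f ` {1..n-4}"
    then obtain i where i: "i \<in> {1..n-4}" "z = f i" by auto
    then have "{0,i} \<in> T3_E n" unfolding T3_E_def by auto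
    then have "f ` {0,i} \<in> E" using f by blast
    then show "z \<in> nb E (f 0)" using i unfolding nb_def by simp
  qed
  moreover have "card (f ` {1..n-4}) = n - 4"
  proof -
    have "inj_on f {1..n-4}" by (rule inj_on_subset[OF f(1)]) auto
    then show ?thesis using n by (simp add: card_image)
  qed
  ultimately show ?thesis using nb_fin[OF G] card_mono by metis
qed

lemma conn_cross:
  assumes "(adj E)\<^sup>*\<^sup>* a b" "a \<in> S" "b \<notin> S"
  shows "\<exists>c d. c \<in> S \<and> d \<notin> S \<and> {c,d} \<in> E"
  using assms
proof (induction rule: rtranclp_induct)
  case base then show ?case by simp
next
  case (step y z)
  show ?case
  proof (cases "y \<in> S")
    case True then show ?thesis using step unfolding adj_def by blast
  next
    case False then show ?thesis using step by blast
  qed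
qed

lemma two_choose: "2 * (k choose 2) = k * (k - 1)"
proof (induction k)
  case 0 show ?case by simp
next
  case (Suc k)
  have "Suc k choose 2 = k + (k choose 2)" using binomial_Suc_Suc[of k 1] by (simp add: numeral_2_eq_2)
  then show ?case using Suc by (cases k) (auto simp: algebra_simps)
qed

lemma touch_count:
  assumes G: "is_graph V E" and W: "W \<subseteq> V"
  shows "2 * card (touch E W) \<le> (\<Sum>x\<in>W. card (nb E x) + card (nb E x - W))"
proof -
  have fV: "finite V" using G unfolding is_graph_def by auto
  have fW: "finite W" using W fV finite_subset by blast
  have fE: "finite E" using E_fin[OF G] .
  have fT: "finite (touch E W)" unfolding touch_def using fE by simp
  define S where "S = {(x,y). {x,y} \<in> E \<and> (x \<in> W \<or> y \<in> W)}"
  define fib where "fib e = {(x,y). {x,y} = e}" for e :: "'a set"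
  have S_eq: "S = \<Union> (fib ` touch E W)"
    unfolding S_def fib_def touch_def by auto
  have cfib: "card (fib e) = 2" if "e \<in> touch E W" for e
  proof -
    have "card e = 2" using that G unfolding touch_def is_graph_def by auto
    then obtain a b where ab: "e = {a,b}" "a \<noteq> b" by (auto simp: card_2_iff)
    have "fib e = {(a,b),(b,a)}" unfolding fib_def ab by (auto simp: doubleton_eq_iff)
    then show ?thesis using ab by simp
  qed
  have ffib: "finite (fib e)" if "e \<in> touch E W" for e
    using cfib[OF that] card.infinite by fastforce
  have "card S = (\<Sum>e\<in>touch E W. card (fib e))"
    unfolding S_eq
  proof (rule card_UN_disjoint[OF fT])
    show "\<forall>i\<in>touch E W. finite (fib i)" using ffib by blast
    show "\<forall>i\<in>touch E W. \<forall>j\<in>touch E W. i \<noteq> j \<longrightarrow> fib i \<inter> fib j = {}"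
      unfolding fib_def by auto
  qed
  also have "\<dots> = 2 * card (touch E W)" using cfib by simp
  finally have cS: "card S = 2 * card (touch E W)" .
  define P where "P = Sigma W (nb E)"
  define Q where "Q = Sigma W (\<lambda>x. nb E x - W)"
  have sub: "S \<subseteq> P \<union> (\<lambda>(x,y). (y,x)) ` Q"
  proof
    fix z assume "z \<in> S"
    then obtain x y where z: "z = (x,y)" "{x,y} \<in> E" "x \<in> W \<or> y \<in> W" unfolding S_def by auto
    show "z \<in> P \<union> (\<lambda>(x,y). (y,x)) ` Q"
    proof (cases "x \<in> W")
      case True then show ?thesis using z unfolding P_def nb_def by auto
    next
      case False
      then have "(y,x) \<in> Q" using z unfolding Q_def nb_def by (auto simp: insert_commute)
      then show ?thesis using z by force
    qed
  qed
  have fP: "finite P" unfolding P_def using fW nb_fin[OF G] by simp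
  have fQ: "finite Q" unfolding Q_def using fW nb_fin[OF G] by simp
  have "card S \<le> card (P \<union> (\<lambda>(x,y). (y,x)) ` Q)"
    using sub fP fQ by (intro card_mono) auto
  also have "\<dots> \<le> card P + card ((\<lambda>(x,y). (y,x)) ` Q)" by (rule card_Un_le)
  also have "\<dots> \<le> card P + card Q" using card_image_le[OF fQ] by simp
  also have "card P = (\<Sum>x\<in>W. card (nb E x))" unfolding P_def using fW nb_fin[OF G] by simp
  also have "card Q = (\<Sum>x\<in>W. card (nb E x - W))" unfolding Q_def using fW nb_fin[OF G] by simp
  finally show ?thesis using cS by (simp add: sum.distrib)
qed

lemma clique_replace:
  assumes G: "is_graph V E" and n: "n \<ge> 10" and cV: "card V = p"
    and nc: "\<not> contains_copy V E (T3_V n) (T3_E n)"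
    and ex: "card E = ex_num p (T3_V n) (T3_E n)"
    and W: "W \<subseteq> V" "card W \<le> n - 1"
  shows "card W * (card W - 1) \<le> 2 * card (touch E W)"
proof -
  have fV: "finite V" using G unfolding is_graph_def by auto
  have fW: "finite W" using W fV finite_subset by blast
  have fE: "finite E" using E_fin[OF G] .
  define E1 where "E1 = {e\<in>E. e \<inter> W = {}}"
  define K where "K = {e. e \<subseteq> W \<and> card e = 2}"
  define E' where "E' = E1 \<union> K"
  have cK: "card K = card W choose 2" unfolding K_def using n_subsets[OF fW] by simp
  have fK: "finite K" unfolding K_def using fW by (auto intro: finite_subset[of _ "Pow W"])
  have fE1: "finite E1" unfolding E1_def using fE by simp
  have dis: "E1 \<inter> K = {}"
  proof -
    have "e \<inter> W \<noteq> {}" if "e \<in> K" for e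
    proof -
      have "card e = 2" "e \<subseteq> W" using that unfolding K_def by auto
      then show ?thesis by (metis card.empty inf.absorb1 zero_neq_numeral)
    qed
    then show ?thesis unfolding E1_def by auto
  qed
  have cE': "card E' = card E1 + card K" unfolding E'_def using card_Un_disjoint[OF fE1 fK dis] .
  have splitE: "E = E1 \<union> touch E W" "E1 \<inter> touch E W = {}" unfolding E1_def touch_def by auto
  have cE: "card E = card E1 + card (touch E W)"
    using card_Un_disjoint[OF fE1 _ splitE(2)] splitE(1) fE unfolding touch_def by simp
  have G': "is_graph V E'" using G W unfolding is_graph_def E'_def E1_def K_def by auto
  have edgeE': "(a \<in> W \<longleftrightarrow> b \<in> W) \<and> (a \<notin> W \<longrightarrow> {a,b} \<in> E)" if "{a,b} \<in> E'" for a b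
    using that unfolding E'_def E1_def K_def by auto
  have nc': "\<not> contains_copy V E' (T3_V n) (T3_E n)"
  proof
    assume "contains_copy V E' (T3_V n) (T3_E n)"
    then obtain f where f: "inj_on f {0..<n}" "f ` {0..<n} \<subseteq> V" "\<forall>e\<in>T3_E n. f ` e \<in> E'"
      unfolding contains_copy_def T3_V_def by blast
    have e0: "{f 0, f i} \<in> E'" if "1 \<le> i" "i \<le> n - 4" for i
    proof -
      have "{0,i} \<in> T3_E n" unfolding T3_E_def using that by auto
      then show ?thesis using f(3) by force
    qed
    have e1: "{f 1, f i} \<in> E'" if "n - 3 \<le> i" "i \<le> n - 1" for i
    proof -
      have "{1,i} \<in> T3_E n" unfolding T3_E_def using that by auto
      then show ?thesis using f(3) by force
    qed
    have f1: "{f 0, f 1} \<in> E'" using e0[of 1] n by simp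
    have cover: "i = 0 \<or> (1 \<le> i \<and> i \<le> n - 4) \<or> (n - 3 \<le> i \<and> i \<le> n - 1)" if "i < n" for i
      using that by auto
    show False
    proof (cases "f 0 \<in> W")
      case True
      then have "f 1 \<in> W" using edgeE'[OF f1] by simp
      have "f i \<in> W" if "i < n" for i
        using cover[OF that] True \<open>f 1 \<in> W\<close> edgeE'[OF e0[of i]] edgeE'[OF e1[of i]] by auto
      then have "f ` {0..<n} \<subseteq> W" by auto
      then have "card (f ` {0..<n}) \<le> card W" using fW card_mono by blast
      then show False using f(1) W(2) n by (simp add: card_image)
    next
      case False
      then have "f 1 \<notin> W" using edgeE'[OF f1] by simp
      have "\<forall>e\<in>T3_E n. f ` e \<in> E"
      proof
        fix e assume "e \<in> T3_E n"
        then consider (a) i where "e = {0,i}" "1 \<le> i" "i \<le> n-4" | (b) i where "e = {1,i}" "n-3 \<le> i" "i \<le> n-1"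
          unfolding T3_E_def by blast
        then show "f ` e \<in> E"
        proof cases
          case a then show ?thesis using edgeE'[OF e0[of i]] False by simp
        next
          case b then show ?thesis using edgeE'[OF e1[of i]] \<open>f 1 \<notin> W\<close> by simp
        qed
      qed
      then have "contains_copy V E (T3_V n) (T3_E n)"
        unfolding contains_copy_def T3_V_def using f(1,2) by blast
      then show False using nc by simp
    qed
  qed
  have "card E' \<le> card E" using ex_bound[OF G' cV nc'] ex by simp
  then have "card W choose 2 \<le> card (touch E W)" using cE' cE cK by simp
  moreover have "2 * (card W choose 2) = card W * (card W - 1)"
    by (rule two_choose)
  ultimately show ?thesis by linarith
qed

lemma card_rm1: "finite A \<Longrightarrow> card A \<le> card (A - {u}) + 1"
  by (cases "u \<in> A") (auto simp: card_Diff_singleton card_gt_0_iff)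

lemma card_Diff1_eq: "finite A \<Longrightarrow> u \<in> A \<Longrightarrow> card (A - {u}) = card A - 1"
  by (simp add: card_Diff_singleton)

lemma sum_le_const: "(\<And>x. x \<in> A \<Longrightarrow> f x \<le> (K::nat)) \<Longrightarrow> sum f A \<le> card A * K"
  using sum_mono[of A f "\<lambda>_. K"] by simp

lemma case_big:
  assumes G: "is_graph V E" and n: "n \<ge> 10"
    and nc: "\<not> contains_copy V E (T3_V n) (T3_E n)"
    and cV: "card V = p" and ex: "card E = ex_num p (T3_V n) (T3_E n)"
    and u: "u \<in> V" "card (nb E u) = D" and D: "D \<ge> n - 1"
  shows False
proof -
  have fin: "finite (nb E z)" for z using nb_fin[OF G] .
  have small: "card (nb E w) \<le> 3" if w: "w \<in> nb E u" for w
  proof (rule ccontr)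
    assume "\<not> ?thesis"
    then have "card (nb E w - {u}) \<ge> 3" using card_rm1[OF fin, of w u] by linarith
    moreover have "card (nb E u - {w}) = D - 1" using card_Diff1_eq[OF fin w] u by simp
    moreover have "{u,w} \<in> E" using w unfolding nb_def by simp
    ultimately have "contains_copy V E (T3_V n) (T3_E n)"
      using T_gen[OF G n, of u w 0] D by simp
    then show False using nc by simp
  qed
  obtain W where W: "W \<subseteq> nb E u" "card W = n - 1" "finite W"
    using obtain_subset_with_card_n[of "n-1" "nb E u"] D u by auto
  have WV: "W \<subseteq> V" using W nb_sub[OF G] by blast
  have "(n-1) * (n-1-1) \<le> 2 * card (touch E W)"
    using clique_replace[OF G n cV nc ex WV] W by simp
  also have "\<dots> \<le> (\<Sum>x\<in>W. card (nb E x) + card (nb E x - W))" using touch_count[OF G WV] .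
  also have "\<dots> \<le> card W * 6"
  proof (rule sum_le_const)
    fix x assume "x \<in> W"
    then have "card (nb E x) \<le> 3" using small W by blast
    moreover have "card (nb E x - W) \<le> card (nb E x)" using fin by (simp add: card_mono)
    ultimately show "card (nb E x) + card (nb E x - W) \<le> 6" by linarith
  qed
  finally have "(n-1) * (n-1-1) \<le> card W * 6" .
  moreover obtain k where k: "n = k + 10" using n by (metis add.commute le_Suc_ex)
  ultimately show False using W by (simp add: algebra_simps)
qed

lemma case_n2:
  assumes G: "is_graph V E" and n: "n \<ge> 10"
    and nc: "\<not> contains_copy V E (T3_V n) (T3_E n)"
    and cV: "card V = p" and p: "p \<ge> n" and ex: "card E = ex_num p (T3_V n) (T3_E n)"
    and conn: "connected_graph V E"
    and u: "u \<in> V" "card (nb E u) = n - 2"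
  shows False
proof -
  have fin: "finite (nb E z)" for z using nb_fin[OF G] .
  define W where "W = insert u (nb E u)"
  have uN: "u \<notin> nb E u" using nb_irr[OF G] .
  have cW: "card W = n - 1" unfolding W_def using uN fin u n by simp
  have WV: "W \<subseteq> V" unfolding W_def using u nb_sub[OF G] by blast
  have fW: "finite W" unfolding W_def using fin by simp
  have b0: "card (nb E w) + card (nb E w - W) \<le> n - 2" if w: "w \<in> nb E u" for w
  proof (cases "nb E w - W = {}")
    case True
    then have "nb E w \<subseteq> W - {w}" using nb_irr[OF G, of w] by auto
    then have "card (nb E w) \<le> card (W - {w})" using fW by (simp add: card_mono)
    also have "\<dots> = n - 2" using cW w W_def card_Diff1_eq[OF fW, of w] by simp
    finally have "card (nb E w) \<le> n - 2" .
    moreover have "card (nb E w - W) = 0" using True by (simp only: card.empty)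
    ultimately show ?thesis by linarith
  next
    case False
    then obtain ov where o: "ov \<in> nb E w" "ov \<notin> W" by auto
    have le2: "card (nb E w - {u}) \<le> 2"
    proof (rule ccontr)
      assume "\<not> ?thesis"
      then have c1: "card (nb E w - {u}) \<ge> 3" by simp
      have "ov \<in> nb E w - {u} - nb E u" using o unfolding W_def by auto
      then have c2: "card (nb E w - {u} - nb E u) \<ge> 1"
        using fin by (metis One_nat_def Suc_leI card_gt_0_iff empty_iff finite_Diff)
      have "card (nb E u - {w}) = n - 3" using card_Diff1_eq[OF fin w] u by simp
      then have c3: "card (nb E u - {w}) + 1 \<ge> n - 2" using n by simp
      have "{u,w} \<in> E" using w unfolding nb_def by simp
      then have "contains_copy V E (T3_V n) (T3_E n)"
        using T_gen[OF G n _ _ c1 c2 c3] by simp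
      then show False using nc by simp
    qed
    have "card (nb E w) \<le> 3" using card_rm1[OF fin, of w u] le2 by linarith
    moreover have "card (nb E w - W) \<le> card (nb E w - {u})"
      using fin unfolding W_def by (intro card_mono) auto
    ultimately show ?thesis using le2 n by linarith
  qed
  have b5: "card (nb E w) + card (nb E w - W) \<le> 5" if w: "w \<in> nb E u" and ne: "nb E w - W \<noteq> {}" for w
  proof -
    obtain ov where o: "ov \<in> nb E w" "ov \<notin> W" using ne by auto
    have le2: "card (nb E w - {u}) \<le> 2"
    proof (rule ccontr)
      assume "\<not> ?thesis"
      then have c1: "card (nb E w - {u}) \<ge> 3" by simp
      have "ov \<in> nb E w - {u} - nb E u" using o unfolding W_def by auto
      then have c2: "card (nb E w - {u} - nb E u) \<ge> 1"
        using fin by (metis One_nat_def Suc_leI card_gt_0_iff empty_iff finite_Diff)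
      have "card (nb E u - {w}) = n - 3" using card_Diff1_eq[OF fin w] u by simp
      then have c3: "card (nb E u - {w}) + 1 \<ge> n - 2" using n by simp
      have "{u,w} \<in> E" using w unfolding nb_def by simp
      then have "contains_copy V E (T3_V n) (T3_E n)"
        using T_gen[OF G n _ _ c1 c2 c3] by simp
      then show False using nc by simp
    qed
    have "card (nb E w) \<le> 3" using card_rm1[OF fin, of w u] le2 by linarith
    moreover have "card (nb E w - W) \<le> card (nb E w - {u})"
      using fin unfolding W_def by (intro card_mono) auto
    ultimately show ?thesis using le2 by linarith
  qed
  have "\<not> V \<subseteq> W"
  proof
    assume "V \<subseteq> W"
    then have "card V \<le> card W" using fW by (simp add: card_mono)
    then show False using cW cV p n by linarith
  qed
  then obtain v where v: "v \<in> V" "v \<notin> W" by auto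
  have "(adj E)\<^sup>*\<^sup>* u v" using conn u v unfolding connected_graph_def by blast
  then obtain c d where cd: "c \<in> W" "d \<notin> W" "{c,d} \<in> E"
    using conn_cross[of E u v W] v unfolding W_def by auto
  have dc: "d \<in> nb E c" using cd unfolding nb_def by simp
  have "c \<noteq> u" using cd unfolding W_def nb_def by auto
  then have cN: "c \<in> nb E u" using cd unfolding W_def by auto
  define g where "g x = card (nb E x) + card (nb E x - W)" for x
  have "(n-1) * (n-1-1) \<le> 2 * card (touch E W)"
    using clique_replace[OF G n cV nc ex WV] cW by simp
  also have "\<dots> \<le> (\<Sum>x\<in>W. g x)" using touch_count[OF G WV] unfolding g_def .
  finally have A: "(n-1) * (n-1-1) \<le> (\<Sum>x\<in>W. g x)" .
  have B: "(\<Sum>x\<in>W. g x) = g u + (\<Sum>x\<in>nb E u. g x)" unfolding W_def using uN fin by simp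
  have C: "(\<Sum>x\<in>nb E u. g x) = g c + (\<Sum>x\<in>nb E u - {c}. g x)"
    using cN fin by (simp add: sum.remove)
  have D0: "(\<Sum>x\<in>nb E u - {c}. g x) \<le> card (nb E u - {c}) * (n - 2)"
    by (rule sum_le_const) (auto simp: g_def intro: b0)
  have "card (nb E u - {c}) = n - 3" using card_Diff1_eq[OF fin cN] u by simp
  then have D: "(\<Sum>x\<in>nb E u - {c}. g x) \<le> (n - 3) * (n - 2)" using D0 by simp
  have "nb E u - W = {}" unfolding W_def by auto
  then have "card (nb E u - W) = 0" by (simp only: card.empty)
  then have gu: "g u = n - 2" unfolding g_def using u by simp
  have gc: "g c \<le> 5" unfolding g_def using b5[OF cN] dc cd by auto
  obtain k where k: "n = k + 10" using n by (metis add.commute le_Suc_ex)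
  have "(n-1) * (n-1-1) \<le> n - 2 + (5 + (n - 3) * (n - 2))" using A B C D gu gc by linarith
  then show False using k by (simp add: algebra_simps)
qed

lemma case_n3:
  assumes G: "is_graph V E" and n: "n \<ge> 10"
    and nc: "\<not> contains_copy V E (T3_V n) (T3_E n)"
    and cV: "card V = p" and p: "p \<ge> n" and ex: "card E = ex_num p (T3_V n) (T3_E n)"
    and degle: "\<And>z. card (nb E z) \<le> n - 3"
    and u: "u \<in> V" "card (nb E u) = n - 3"
  shows False
proof -
  have fin: "finite (nb E z)" for z using nb_fin[OF G] .
  define U where "U = insert u (nb E u)"
  have uN: "u \<notin> nb E u" using nb_irr[OF G] .
  have cU: "card U = n - 2" unfolding U_def using uN fin u n by simp
  have UV: "U \<subseteq> V" unfolding U_def using u nb_sub[OF G] by blast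
  have fU: "finite U" unfolding U_def using fin by simp
  define bad where "bad w \<longleftrightarrow> card (nb E w) = n - 3 \<and> card (nb E w - U) = 1" for w
  have bw: "card (nb E w) + card (nb E w - W) \<le> n - 2 \<and> (\<not> bad w \<longrightarrow> card (nb E w) + card (nb E w - W) \<le> n - 3)"
    if w: "w \<in> nb E u" and W: "U \<subseteq> W" for w W
  proof (cases "card (nb E w - U) \<ge> 2")
    case True
    have le2: "card (nb E w - {u}) \<le> 2"
    proof (rule ccontr)
      assume "\<not> ?thesis"
      then have c1: "card (nb E w - {u}) \<ge> 3" by simp
      have "nb E w - {u} - nb E u = nb E w - U" unfolding U_def by auto
      then have c2: "card (nb E w - {u} - nb E u) \<ge> 2" using True by simp
      have "card (nb E u - {w}) = n - 4" using card_Diff1_eq[OF fin w] u by simp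
      then have c3: "card (nb E u - {w}) + 2 \<ge> n - 2" using n by simp
      have "{u,w} \<in> E" using w unfolding nb_def by simp
      then have "contains_copy V E (T3_V n) (T3_E n)"
        using T_gen[OF G n _ _ c1 c2 c3] by simp
      then show False using nc by simp
    qed
    have "card (nb E w) \<le> 3" using card_rm1[OF fin, of w u] le2 by linarith
    moreover have "card (nb E w - W) \<le> card (nb E w - {u})"
      using fin W unfolding U_def by (intro card_mono) auto
    ultimately show ?thesis using le2 n by linarith
  next
    case False
    have "card (nb E w - W) \<le> card (nb E w - U)"
      using fin W by (intro card_mono) auto
    moreover have "card (nb E w) \<le> n - 3" using degle .
    ultimately show ?thesis using False n unfolding bad_def by auto
  qed
  have "\<not> V \<subseteq> U"
  proof
    assume "V \<subseteq> U"
    then have "card V \<le> card U" using fU by (simp add: card_mono)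
    then show False using cU cV p n by linarith
  qed
  then obtain y0 where y0: "y0 \<in> V" "y0 \<notin> U" by auto
  obtain y where y: "y \<in> V" "y \<notin> U"
    and ybound: "card (nb E y) + card (nb E y - insert y U) \<le> (if \<exists>w\<in>nb E u. bad w then n - 2 else 2 * (n - 3))"
  proof (cases "\<exists>w\<in>nb E u. bad w")
    case True
    then obtain w where w: "w \<in> nb E u" "bad w" by auto
    then have "card (nb E w - U) = 1" "card (nb E w) = n - 3" unfolding bad_def by auto
    then obtain y where yO: "nb E w - U = {y}" by (auto simp: card_1_singleton_iff)
    then have yw: "y \<in> nb E w" "y \<notin> U" by auto
    have yV: "y \<in> V" using yw nb_sub[OF G] by blast
    have wy: "{w,y} \<in> E" using yw unfolding nb_def by simp
    have cwy: "card (nb E w - {y}) = n - 4" using card_Diff1_eq[OF fin yw(1)] \<open>card (nb E w) = n - 3\<close> by simp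
    have sub: "insert w (nb E w) \<subseteq> insert y U" using yO w(1) unfolding U_def by auto
    have "card (nb E y) + card (nb E y - insert y U) \<le> n - 2"
    proof (cases "card (nb E y - insert w (nb E w)) \<ge> 2")
      case True
      have le2: "card (nb E y - {w}) \<le> 2"
      proof (rule ccontr)
        assume "\<not> ?thesis"
        then have c1: "card (nb E y - {w}) \<ge> 3" by simp
        have "nb E y - {w} - nb E w = nb E y - insert w (nb E w)" by auto
        then have c2: "card (nb E y - {w} - nb E w) \<ge> 2" using True by simp
        have c3: "card (nb E w - {y}) + 2 \<ge> n - 2" using cwy n by simp
        have "contains_copy V E (T3_V n) (T3_E n)"
          using T_gen[OF G n wy _ c1 c2 c3] by simp
        then show False using nc by simp
      qed
      have "card (nb E y) \<le> 3" using card_rm1[OF fin, of y w] le2 by linarith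
      moreover have "card (nb E y - insert y U) \<le> card (nb E y)"
        using fin by (intro card_mono) auto
      ultimately show ?thesis using n by linarith
    next
      case False
      have "card (nb E y - insert y U) \<le> card (nb E y - insert w (nb E w))"
        using fin sub by (intro card_mono) auto
      then show ?thesis using False degle[of y] n by linarith
    qed
    then show ?thesis using that yV yw True by simp
  next
    case False
    have "card (nb E y0 - insert y0 U) \<le> card (nb E y0)"
      using fin by (intro card_mono) auto
    then have "card (nb E y0) + card (nb E y0 - insert y0 U) \<le> 2 * (n - 3)" using degle[of y0] by linarith
    then show ?thesis using that y0 False by simp
  qed
  define W where "W = insert y U"
  have cW: "card W = n - 1" unfolding W_def using y fU cU n by simp
  have WV: "W \<subseteq> V" unfolding W_def using y UV by blast
  define g where "g x = card (nb E x) + card (nb E x - W)" for x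
  have UW: "U \<subseteq> W" unfolding W_def by auto
  have "(n-1) * (n-1-1) \<le> 2 * card (touch E W)"
    using clique_replace[OF G n cV nc ex WV] cW by simp
  also have "\<dots> \<le> (\<Sum>x\<in>W. g x)" using touch_count[OF G WV] unfolding g_def .
  also have "\<dots> = g y + (g u + (\<Sum>x\<in>nb E u. g x))" unfolding W_def U_def using uN fin y unfolding U_def by simp
  finally have main: "(n-1) * (n-1-1) \<le> g y + (g u + (\<Sum>x\<in>nb E u. g x))" .
  have "nb E u - W = {}" unfolding W_def U_def by auto
  then have "card (nb E u - W) = 0" by (simp only: card.empty)
  then have gu: "g u = n - 3" unfolding g_def using u by simp
  have gy: "g y \<le> (if \<exists>w\<in>nb E u. bad w then n - 2 else 2 * (n - 3))"
    using ybound unfolding g_def W_def .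
  show False
  proof (cases "\<exists>w\<in>nb E u. bad w")
    case True
    have "(\<Sum>x\<in>nb E u. g x) \<le> card (nb E u) * (n - 2)"
      by (rule sum_le_const) (use bw UW in \<open>auto simp: g_def\<close>)
    then have "(n-1) * (n-1-1) \<le> (n - 2) + ((n - 3) + (n - 3) * (n - 2))"
      using main gu gy True u by simp
    moreover obtain k where k: "n = k + 10" using n by (metis add.commute le_Suc_ex)
    ultimately show False by (simp add: algebra_simps)
  next
    case False
    have "(\<Sum>x\<in>nb E u. g x) \<le> card (nb E u) * (n - 3)"
      by (rule sum_le_const) (use bw UW False in \<open>auto simp: g_def\<close>)
    then have "(n-1) * (n-1-1) \<le> 2 * (n - 3) + ((n - 3) + (n - 3) * (n - 3))"
      using main gu gy False u by simp
    moreover obtain k where k: "n = k + 10" using n by (metis add.commute le_Suc_ex)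
    ultimately show False by (simp add: algebra_simps)
  qed
qed

theorem lemma4p1:
  fixes p n :: nat and V :: "'a set" and E :: "'a set set"
  assumes "n \<ge> 10" and "p \<ge> n"
    and "in_Ex p (T3_V n) (T3_E n) V E"
    and "connected_graph V E"
  shows "max_degree V E \<in> {n - 5, n - 4}"
proof -
  note n = assms(1) and p = assms(2) and conn = assms(4)
  have G: "is_graph V E" and cV: "card V = p" and nc: "\<not> contains_copy V E (T3_V n) (T3_E n)"
    and ex: "card E = ex_num p (T3_V n) (T3_E n)"
    using assms(3) unfolding in_Ex_def by auto
  have fin: "finite (nb E z)" for z using nb_fin[OF G] .
  have fV: "finite V" using G unfolding is_graph_def by auto
  have Vne: "V \<noteq> {}" using cV p n by auto
  define D where "D = max_degree V E"
  have fD: "finite (degree E ` V)" using fV by simp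
  have degle: "card (nb E z) \<le> D" for z
  proof (cases "z \<in> V")
    case True
    then have "degree E z \<le> D" unfolding D_def max_degree_def using Max_ge[OF fD] by simp
    then show ?thesis using degree_nb[OF G] by simp
  next
    case False
    then have "nb E z = {}" using nb_V[OF G] nb_sym by blast
    then show ?thesis by simp
  qed
  obtain u where u: "u \<in> V" "card (nb E u) = D"
  proof -
    have "D \<in> degree E ` V" unfolding D_def max_degree_def using Max_in[OF fD] Vne by simp
    then show ?thesis using that degree_nb[OF G] by auto
  qed
  have lo: "n - 5 \<le> D"
  proof (rule ccontr)
    assume "\<not> ?thesis"
    then have Dle: "D \<le> n - 6" by simp
    have "\<not> V \<subseteq> insert u (nb E u)"
    proof
      assume "V \<subseteq> insert u (nb E u)"
      then have "card V \<le> card (insert u (nb E u))" using fin by (simp add: card_mono)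
      also have "\<dots> \<le> card (nb E u) + 1" by (simp add: card_insert_le_m1 card_insert_if fin)
      finally show False using cV p n u Dle by linarith
    qed
    then obtain x where x: "x \<in> V" "x \<notin> insert u (nb E u)" by auto
    define E' where "E' = insert {u,x} E"
    have xu: "x \<noteq> u" using x by auto
    have notin: "{u,x} \<notin> E" using x unfolding nb_def by auto
    have G': "is_graph V E'" using G u x xu unfolding E'_def is_graph_def by auto
    have cE': "card E' = card E + 1" unfolding E'_def using notin E_fin[OF G] by simp
    have nbE': "nb E' z \<subseteq> insert (if z = u then x else u) (nb E z)" for z
      unfolding E'_def nb_def by (auto simp: doubleton_eq_iff)
    have nc': "\<not> contains_copy V E' (T3_V n) (T3_E n)"
    proof
      assume "contains_copy V E' (T3_V n) (T3_E n)"
      then obtain z where z: "n - 4 \<le> card (nb E' z)" using copy_deg[OF G' n] by blast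
      have "card (nb E' z) \<le> card (insert (if z = u then x else u) (nb E z))"
        using nbE'[of z] fin by (simp add: card_mono)
      also have "\<dots> \<le> card (nb E z) + 1" by (simp add: card_insert_if fin)
      finally show False using z degle[of z] Dle n by linarith
    qed
    have "card E' \<le> card E" using ex_bound[OF G' cV nc'] ex by simp
    then show False using cE' by simp
  qed
  have hi: "D \<le> n - 4"
  proof (rule ccontr)
    assume "\<not> ?thesis"
    then consider "D \<ge> n - 1" | "D = n - 2" | "D = n - 3" by linarith
    then show False
    proof cases
      case 1 then show False using case_big[OF G n nc cV ex u] by simp
    next
      case 2 then show False using case_n2[OF G n nc cV p ex conn u(1)] u by simp
    next
      case 3 then show False using case_n3[OF G n nc cV p ex _ u(1)] u degle by simp
    qed
  qed
  have "D = n - 5 \<or> D = n - 4" using lo hi n by linarith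
  then show ?thesis unfolding D_def by auto
qed

end
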